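(* The recurrence coefficients satisfy \[ \alpha_n(\vec t)=\sum_{k=1}^m t_kR_{n,k}+2n+1+\alpha,\qquad \beta_n(\vec t)=\frac{\big(n+\alpha+\sum_{k=1}^m r_{n,k}\big)\big(n+\sum_{k=1}^m r_{n,k}\big)}{1-\sum_{k=1}^m R_{n,k}}+\sum_{k=1}^m\frac{r_{n,k}^2}{R_{n,k}}. \]
   Context: Let $m\ge1$, $\alpha>-1$, $0<t_1<\dots<t_m$, real $\omega_0,\dots,\omega_m$ with $\sum_{k=0}^\ell\omega_k\ge0$ for $\ell=0,\dots,m$, $\theta$ the Heaviside function, $w_0(x)=x^\alpha e^{-x}$, $w(x;\vec t)=w_0(x)\big(\omega_0+\sum_k\omega_k\theta(x-t_k)\big)$ on $[0,\infty)$, $P_n$ the monic orthogonal polynomials w.r.t. $w$, $h_n=\int_0^\infty P_n^2w\,dx$, with three-term recurrence $xP_n=P_{n+1}+\alpha_nP_n+\beta_nP_{n-1}$, $\beta_n=h_n/h_{n-1}$. $R_{n,k}=\omega_k\frac{w_0(t_k)}{h_n}P_n^2(t_k)$, $r_{n,k}=\omega_k\frac{w_0(t_k)}{h_{n-1}}P_n(t_k)P_{n-1}(t_k)$. *)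

theory Defs
  imports "HOL-Analysis.Analysis" "HOL-Computational_Algebra.Polynomial"
begin

text \<open>Heaviside function (the value at 0 is irrelevant, a null set).\<close>
definition heaviside :: "real \<Rightarrow> real" where
  "heaviside x = (if x \<ge> 0 then 1 else 0)"

definition w0 :: "real \<Rightarrow> real \<Rightarrow> real" where
  "w0 a x = x powr a * exp (- x)"

definition wgt :: "nat \<Rightarrow> real \<Rightarrow> (nat \<Rightarrow> real) \<Rightarrow> (nat \<Rightarrow> real) \<Rightarrow> real \<Rightarrow> real" where
  "wgt m a om t x = w0 a x * (om 0 + (\<Sum>k=1..m. om k * heaviside (x - t k)))"

definition ip :: "(real \<Rightarrow> real) \<Rightarrow> real poly \<Rightarrow> real poly \<Rightarrow> real" where
  "ip w p q = (LINT x:{0..}|lborel. poly p x * poly q x * w x)"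

definition monic_OPs :: "(real \<Rightarrow> real) \<Rightarrow> (nat \<Rightarrow> real poly) \<Rightarrow> bool" where
  "monic_OPs w P \<longleftrightarrow>
     (\<forall>n. degree (P n) = n \<and> lead_coeff (P n) = 1 \<and> ip w (P n) (P n) \<noteq> 0) \<and>
     (\<forall>m n. m \<noteq> n \<longrightarrow> ip w (P m) (P n) = 0)"

end

theory Submission
  imports Defs "HOL-Real_Asymp.Real_Asymp"
begin


lemma int_powr_exp:
  fixes b :: real assumes "b > -1"
  shows "set_integrable lborel {0..} (\<lambda>x. x powr b / exp x)"
proof -
  have "Gamma (b+1) = nn_integral lborel (\<lambda>t. ennreal (indicator {0..} t * t powr (b + 1 - 1) / exp t))"
    by (rule Gamma_conv_nn_integral_real) (use assms in auto)
  hence fin: "(\<integral>\<^sup>+t. ennreal (indicator {0..} t * t powr b / exp t) \<partial>lborel) < \<infinity>"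
    by (metis ennreal_less_top infinity_ennreal_def add_diff_cancel_right')
  show ?thesis unfolding set_integrable_def
    apply (rule integrableI_nonneg)
    using fin by (auto simp: indicator_def)
qed

lemma lim_top: "((\<lambda>x::real. x powr c / exp x) \<longlongrightarrow> 0) at_top"
  by real_asymp



lemma int_mono:
  assumes "a > -1" shows "set_integrable lborel {0..} (\<lambda>x. x^j * w0 a x)"
proof -
  have H: "set_integrable lborel {0..} (\<lambda>x. x powr (a + real j) / exp x)"
    by (rule int_powr_exp) (use assms in simp)
  have eq: "x^j * w0 a x = x powr (a + real j) / exp x" if "x \<in> {0..}" for x
  proof (cases "x = 0")
    case True thus ?thesis by (simp add: w0_def)
  next
    case False
    with that have "x > 0" by auto
    thus ?thesis by (simp add: w0_def powr_add powr_realpow exp_minus divide_inverse mult_ac)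
  qed
  have "set_integrable lborel {0..} (\<lambda>x. x^j * w0 a x) = set_integrable lborel {0..} (\<lambda>x. x powr (a + real j) / exp x)"
    by (rule set_integrable_cong) (simp_all add: eq)
  with H show ?thesis by (simp only:)
qed

lemma int_poly:
  assumes "a > -1" shows "set_integrable lborel {0..} (\<lambda>x. poly f x * w0 a x)"
proof -
  have "\<And>i. set_integrable lborel {0..} (\<lambda>x. coeff f i * (x^i * w0 a x))"
    using int_mono[OF assms] by (intro set_integrable_mult_right)
  hence I: "\<And>i. integrable lborel (\<lambda>x. indicator {0..} x *\<^sub>R (coeff f i * (x^i * w0 a x)))"
    unfolding set_integrable_def .
  have S: "integrable lborel (\<lambda>x. \<Sum>i\<le>degree f. indicator {0..} x *\<^sub>R (coeff f i * (x^i * w0 a x)))"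
    by (rule Bochner_Integration.integrable_sum[where f="\<lambda>i x. indicator {0..} x *\<^sub>R (coeff f i * (x^i * w0 a x))"]) (rule I)
  have P: "\<And>x. poly f x * w0 a x = (\<Sum>i\<le>degree f. coeff f i * (x^i * w0 a x))"
    by (simp add: poly_altdef sum_distrib_right mult.assoc)
  show ?thesis unfolding set_integrable_def P scaleR_sum_right by (rule S)
qed

lemma int_poly_s:
  assumes "a > -1" "s \<ge> 0" shows "set_integrable lborel {s..} (\<lambda>x. poly f x * w0 a x)"
  by (rule set_integrable_subset[OF int_poly[OF assms(1)]]) (use assms in auto)

lemma G_top:
  fixes a :: real
  shows "((\<lambda>x. x powr (a+1) * exp (-x) * poly f x) \<longlongrightarrow> 0) at_top"
proof -
  have "((\<lambda>x. \<Sum>i\<le>degree f. coeff f i * (x powr (a + 1 + real i) / exp x)) \<longlongrightarrow> 0) at_top"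
    by (intro tendsto_null_sum tendsto_mult_right_zero lim_top)
  moreover have "\<forall>\<^sub>F x in at_top. (\<Sum>i\<le>degree f. coeff f i * (x powr (a + 1 + real i) / exp x))
       = x powr (a+1) * exp (-x) * poly f x"
    using eventually_gt_at_top[of 0]
  proof eventually_elim
    case (elim x)
    thus ?case by (simp add: poly_altdef sum_distrib_left powr_add powr_realpow exp_minus
        divide_inverse mult_ac)
  qed
  ultimately show ?thesis by (rule Lim_transform_eventually)
qed

lemma G_zero:
  fixes a :: real
  assumes "a > -1"
  shows "((\<lambda>x. x powr (a+1) * exp (-x) * poly f x) \<longlongrightarrow> 0) (at_right 0)"
proof -
  have "((\<lambda>x::real. x powr (a+1)) \<longlongrightarrow> 0) (at_right 0)"
  proof (rule tendsto_zero_powrI[where b="a+1"])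
    show "\<forall>\<^sub>F x in at_right 0. 0 \<le> (x::real)"
      using eventually_at_right_less[of "0::real"] by (rule eventually_mono) auto
  qed (use assms in \<open>simp_all add: tendsto_ident_at\<close>)
  moreover have "isCont (\<lambda>x. exp (-x) * poly f x) 0"
    by (intro continuous_intros)
  hence "((\<lambda>x. exp (-x) * poly f x) \<longlongrightarrow> exp (-0) * poly f 0) (at_right 0)"
    unfolding isCont_def by (rule Lim_at_imp_Lim_at_within)
  ultimately have "((\<lambda>x. x powr (a+1) * (exp (-x) * poly f x)) \<longlongrightarrow> 0 * (exp (-0) * poly f 0)) (at_right 0)"
    by (rule tendsto_mult)
  thus ?thesis by (simp add: mult.assoc)
qed



lemma core:
  fixes a s :: real and f :: "real poly"
  assumes a: "a > -1" and s: "s \<ge> 0"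
  shows "(LINT x:{s..}|lborel. poly (smult (a+1) f + pCons 0 (pderiv f) - pCons 0 f) x * w0 a x)
         = - (s powr (a+1) * exp (-s) * poly f s)"
proof -
  define D where "D = smult (a+1) f + pCons 0 (pderiv f) - pCons 0 f"
  define g where "g x = poly D x * w0 a x" for x
  define G where "G x = x powr (a+1) * exp (-x) * poly f x" for x
  have intS: "set_integrable lborel {s..} g" unfolding g_def by (rule int_poly_s[OF a s])
  have intS': "set_integrable lborel {s<..} g" by (rule set_integrable_subset[OF intS]) auto
  have m1: "set_borel_measurable lborel {s..} g"
    unfolding set_borel_measurable_def using intS unfolding set_integrable_def
    by (rule borel_measurable_integrable)
  have m2: "set_borel_measurable lborel {s<..} g"
    unfolding set_borel_measurable_def using intS' unfolding set_integrable_def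
    by (rule borel_measurable_integrable)
  have "(LINT x:{s..}|lborel. g x) = (LINT x:{s<..}|lborel. g x)"
  proof (rule set_integral_cong_set[OF m2 m1])
    show "AE x in lborel. (x \<in> {s<..}) = (x \<in> {s..})"
      using AE_lborel_singleton[of s] by eventually_elim auto
  qed
  also have "\<dots> = (LBINT x=ereal s..\<infinity>. g x)" by (simp add: interval_integral_to_infinity_eq)
  also have "\<dots> = 0 - G s"
  proof (rule interval_integral_FTC_integrable)
    show "ereal s < \<infinity>" by simp
  next
    fix x assume "ereal s < ereal x" "ereal x < \<infinity>"
    hence x: "x > 0" using s by auto
    have d: "(G has_real_derivative ((a+1) * x powr (a+1-1) * exp(-x) * poly f x
        + x powr (a+1) * (exp(-x) * (-1)) * poly f x + x powr (a+1) * exp(-x) * poly (pderiv f) x)) (at x)"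
      unfolding G_def using x by (auto intro!: derivative_eq_intros simp: algebra_simps)
    have pw: "x powr (a+1) = x * x powr a" using x by (simp add: powr_add)
    have "(a+1) * x powr (a+1-1) * exp(-x) * poly f x
        + x powr (a+1) * (exp(-x) * (-1)) * poly f x + x powr (a+1) * exp(-x) * poly (pderiv f) x = g x"
      unfolding pw g_def D_def w0_def by (simp add: algebra_simps)
    with d show "(G has_vector_derivative g x) (at x)"
      by (simp add: has_real_derivative_iff_has_vector_derivative)
    show "isCont g x" unfolding g_def w0_def using x by (auto intro!: continuous_intros)
  next
    show "set_integrable lborel (einterval s \<infinity>) g" using intS' by simp
  next
    show "((G \<circ> real_of_ereal) \<longlongrightarrow> G s) (at_right (ereal s))"
      unfolding ereal_tendsto_simps1
    proof (cases "s = 0")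
      case True
      thus "(G \<longlongrightarrow> G s) (at_right s)" unfolding G_def using G_zero[OF a, of f] by simp
    next
      case False
      hence "s > 0" using s by auto
      hence "isCont G s" unfolding G_def by (auto intro!: continuous_intros)
      thus "(G \<longlongrightarrow> G s) (at_right s)" unfolding isCont_def by (rule Lim_at_imp_Lim_at_within)
    qed
  next
    show "((G \<circ> real_of_ereal) \<longlongrightarrow> 0) (at_left \<infinity>)"
      unfolding ereal_tendsto_simps1 G_def by (rule G_top)
  qed
  finally show ?thesis unfolding g_def D_def G_def by simp
qed



definition J :: "real \<Rightarrow> real \<Rightarrow> real poly \<Rightarrow> real" where
  "J a s f = (LINT x:{s..}|lborel. poly f x * w0 a x)"

definition Iw :: "nat \<Rightarrow> real \<Rightarrow> (nat \<Rightarrow> real) \<Rightarrow> (nat \<Rightarrow> real) \<Rightarrow> real poly \<Rightarrow> real" where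
  "Iw m a om t f = (LINT x:{0..}|lborel. poly f x * wgt m a om t x)"

lemma J_add: assumes "a > -1" "s \<ge> 0" shows "J a s (f + g) = J a s f + J a s g"
proof -
  have "J a s (f + g) = (LINT x:{s..}|lborel. poly f x * w0 a x + poly g x * w0 a x)"
    unfolding J_def by (simp add: distrib_right)
  also have "\<dots> = J a s f + J a s g"
    unfolding J_def by (rule set_integral_add(2)) (rule int_poly_s[OF assms])+
  finally show ?thesis .
qed

lemma J_smult: "J a s (smult c f) = c * J a s f"
proof -
  have "J a s (smult c f) = (LINT x:{s..}|lborel. c * (poly f x * w0 a x))"
    unfolding J_def by (simp add: mult.assoc)
  also have "\<dots> = c * J a s f" unfolding J_def by (rule set_integral_mult_right)
  finally show ?thesis .
qed

lemma J_core:
  assumes a: "a > -1" and s: "s \<ge> 0"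
  shows "J a s (smult (a+1) f + pCons 0 (pderiv f) - pCons 0 f) = - (s powr (a+1) * exp (-s) * poly f s)"
  unfolding J_def by (rule core[OF a s])

lemma hv: "s \<ge> 0 \<Longrightarrow> indicator {0..} x * heaviside (x - s) = (indicator {s..} x :: real)"
  by (auto simp: heaviside_def indicator_def)

lemma Iw_repr:
  assumes a: "a > -1" and tp: "\<forall>k\<in>{1..m}. t k \<ge> 0"
  shows "Iw m a om t f = om 0 * J a 0 f + (\<Sum>k=1..m. om k * J a (t k) f)"
proof -
  have tpos: "\<And>k. k \<in> {1..m} \<Longrightarrow> t k \<ge> 0" using tp by blast
  define F where "F x = poly f x * w0 a x" for x
  have pt: "indicator {0..} x *\<^sub>R (poly f x * wgt m a om t x) =
      om 0 * (indicator {0..} x *\<^sub>R F x) + (\<Sum>k=1..m. om k * (indicator {t k..} x *\<^sub>R F x))" for x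
  proof -
    have "indicator {0..} x *\<^sub>R (poly f x * wgt m a om t x) =
       om 0 * (indicator {0..} x *\<^sub>R F x) + (\<Sum>k=1..m. om k * ((indicator {0..} x * heaviside (x - t k)) * F x))"
      unfolding F_def wgt_def by (simp add: sum_distrib_left sum_distrib_right algebra_simps)
    also have "\<dots> = om 0 * (indicator {0..} x *\<^sub>R F x) + (\<Sum>k=1..m. om k * (indicator {t k..} x *\<^sub>R F x))"
      by (intro arg_cong2[where f="(+)"] refl sum.cong) (simp_all add: hv tpos)
    finally show ?thesis .
  qed
  have iF: "\<And>s. s \<ge> 0 \<Longrightarrow> integrable lborel (\<lambda>x. indicator {s..} x *\<^sub>R F x)"
    using int_poly_s[OF a] unfolding set_integrable_def F_def by blast
  have "Iw m a om t f = (\<integral>x. om 0 * (indicator {0..} x *\<^sub>R F x) + (\<Sum>k=1..m. om k * (indicator {t k..} x *\<^sub>R F x)) \<partial>lborel)"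
    unfolding Iw_def set_lebesgue_integral_def pt ..
  also have "\<dots> = (\<integral>x. om 0 * (indicator {0..} x *\<^sub>R F x) \<partial>lborel) + (\<integral>x. (\<Sum>k=1..m. om k * (indicator {t k..} x *\<^sub>R F x)) \<partial>lborel)"
  proof (rule Bochner_Integration.integral_add)
    show "integrable lborel (\<lambda>x. om 0 * (indicator {0..} x *\<^sub>R F x))"
      by (rule integrable_mult_right) (rule iF, simp)
    show "integrable lborel (\<lambda>x. \<Sum>k=1..m. om k * (indicator {t k..} x *\<^sub>R F x))"
      by (rule Bochner_Integration.integrable_sum, rule integrable_mult_right, rule iF, rule tpos)
  qed
  also have "(\<integral>x. (\<Sum>k=1..m. om k * (indicator {t k..} x *\<^sub>R F x)) \<partial>lborel) = (\<Sum>k=1..m. (\<integral>x. om k * (indicator {t k..} x *\<^sub>R F x) \<partial>lborel))"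
    by (rule Bochner_Integration.integral_sum, rule integrable_mult_right, rule iF, rule tpos)
  finally show ?thesis
    unfolding J_def set_lebesgue_integral_def F_def by (simp only: integral_mult_right_zero)
qed



lemma Iw_add:
  assumes a: "a > -1" and tp: "\<forall>k\<in>{1..m}. t k \<ge> 0"
  shows "Iw m a om t (f + g) = Iw m a om t f + Iw m a om t g"
proof -
  have tpos: "\<And>k. k \<in> {1..m} \<Longrightarrow> t k \<ge> 0" using tp by blast
  have "(\<Sum>k=1..m. om k * J a (t k) (f + g)) = (\<Sum>k=1..m. om k * J a (t k) f + om k * J a (t k) g)"
    by (rule sum.cong) (simp_all add: J_add[OF a tpos] distrib_left)
  thus ?thesis unfolding Iw_repr[OF a tp]
    by (simp add: J_add[OF a order_refl] sum.distrib algebra_simps)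
qed

lemma Iw_smult:
  assumes a: "a > -1" and tp: "\<forall>k\<in>{1..m}. t k \<ge> 0"
  shows "Iw m a om t (smult c f) = c * Iw m a om t f"
  unfolding Iw_repr[OF a tp] by (simp add: J_smult sum_distrib_left algebra_simps)

lemma Iw_diff:
  assumes a: "a > -1" and tp: "\<forall>k\<in>{1..m}. t k \<ge> 0"
  shows "Iw m a om t (f - g) = Iw m a om t f - Iw m a om t g"
proof -
  have "Iw m a om t (f - g) = Iw m a om t (f + smult (-1) g)" by simp
  also have "\<dots> = Iw m a om t f + Iw m a om t (smult (-1) g)" by (rule Iw_add[OF a tp])
  also have "\<dots> = Iw m a om t f - Iw m a om t g" unfolding Iw_smult[OF a tp] by simp
  finally show ?thesis .
qed

lemma Iw_zero:
  assumes a: "a > -1" and tp: "\<forall>k\<in>{1..m}. t k \<ge> 0"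
  shows "Iw m a om t 0 = 0"
  using Iw_smult[OF a tp, of _ 0 0] by simp

lemma Iw_F1:
  assumes a: "a > -1" and tpos: "\<And>k. k \<in> {1..m} \<Longrightarrow> t k > 0"
  shows "Iw m a om t (smult (a+1) f + pCons 0 (pderiv f) - pCons 0 f)
     = - (\<Sum>k=1..m. om k * w0 a (t k) * poly (pCons 0 f) (t k))"
proof -
  have tpos': "\<And>k. k \<in> {1..m} \<Longrightarrow> t k \<ge> 0" using tpos by (simp add: less_imp_le)
  have tp: "\<forall>k\<in>{1..m}. t k \<ge> 0" using tpos' by blast
  have "(\<Sum>k=1..m. om k * J a (t k) (smult (a+1) f + pCons 0 (pderiv f) - pCons 0 f))
      = (\<Sum>k=1..m. - (om k * w0 a (t k) * poly (pCons 0 f) (t k)))"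
  proof (rule sum.cong)
    fix k assume k: "k \<in> {1..m}"
    have "t k powr (a+1) = t k * t k powr a" using tpos[OF k] by (simp add: powr_add)
    thus "om k * J a (t k) (smult (a+1) f + pCons 0 (pderiv f) - pCons 0 f) = - (om k * w0 a (t k) * poly (pCons 0 f) (t k))"
      by (simp add: J_core[OF a tpos'[OF k]] w0_def)
  qed simp
  thus ?thesis unfolding Iw_repr[OF a tp]
    by (simp add: J_core[OF a order_refl] sum_negf)
qed



locale opsys =
  fixes I :: "real poly \<Rightarrow> real" and S :: "real poly \<Rightarrow> real" and P :: "nat \<Rightarrow> real poly" and a :: real
  assumes I_add: "I (p + q) = I p + I q"
    and I_smult: "I (smult c p) = c * I p"
    and S_add: "S (p + q) = S p + S q"
    and S_smult: "S (smult c p) = c * S p"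
    and F1: "I (smult (a+1) f + pCons 0 (pderiv f) - pCons 0 f) = - S (pCons 0 f)"
    and degP: "degree (P n) = n"
    and monP: "lead_coeff (P n) = 1"
    and orth: "k \<noteq> n \<Longrightarrow> I (P k * P n) = 0"
begin

lemma I_zero: "I 0 = 0" using I_smult[of 0 0] by simp
lemma S_zero: "S 0 = 0" using S_smult[of 0 0] by simp
lemma I_diff: "I (p - q) = I p - I q"
proof -
  have "I p = I ((p - q) + q)" by simp
  also have "\<dots> = I (p - q) + I q" by (rule I_add)
  finally show ?thesis by simp
qed
lemma S_diff: "S (p - q) = S p - S q"
proof -
  have "S p = S ((p - q) + q)" by simp
  also have "\<dots> = S (p - q) + S q" by (rule S_add)
  finally show ?thesis by simp
qed

lemma coeffP: "coeff (P n) n = 1" using monP[of n] degP[of n] by simp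
lemma coeffP0: "i > n \<Longrightarrow> coeff (P n) i = 0" using degP[of n] by (simp add: coeff_eq_0)

lemma O1: "(\<forall>i\<ge>d. coeff q i = 0) \<Longrightarrow> d \<le> n \<Longrightarrow> I (P n * q) = 0"
proof (induction d arbitrary: q)
  case 0
  hence "q = 0" by (auto simp: poly_eq_iff)
  thus ?case by (simp add: I_zero)
next
  case (Suc d)
  define r where "r = q - smult (coeff q d) (P d)"
  have r: "\<forall>i\<ge>d. coeff r i = 0"
  proof (intro allI impI)
    fix i assume i: "d \<le> i"
    show "coeff r i = 0"
    proof (cases "i = d")
      case True thus ?thesis by (simp add: r_def coeffP)
    next
      case False
      hence "i > d" using i by simp
      thus ?thesis using Suc.prems(1) by (simp add: r_def coeffP0)
    qed
  qed
  have IH: "I (P n * r) = 0" using Suc.IH[OF r] Suc.prems(2) by simp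
  have "P n * q = P n * r + smult (coeff q d) (P d * P n)"
    by (simp add: r_def algebra_simps)
  hence "I (P n * q) = I (P n * r) + coeff q d * I (P d * P n)"
    by (simp add: I_add I_smult)
  also have "I (P d * P n) = 0" using Suc.prems(2) by (intro orth) simp
  finally show ?case using IH by simp
qed

lemma O2: assumes "degree q \<le> n" shows "I (P n * q) = coeff q n * I (P n * P n)"
proof -
  define r where "r = q - smult (coeff q n) (P n)"
  have r: "\<forall>i\<ge>n. coeff r i = 0"
  proof (intro allI impI)
    fix i assume i: "n \<le> i"
    show "coeff r i = 0"
    proof (cases "i = n")
      case True thus ?thesis by (simp add: r_def coeffP)
    next
      case False
      hence "i > n" using i by simp
      thus ?thesis using assms by (simp add: r_def coeffP0 coeff_eq_0)
    qed
  qed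
  have "P n * q = P n * r + smult (coeff q n) (P n * P n)"
    by (simp add: r_def algebra_simps)
  hence "I (P n * q) = I (P n * r) + coeff q n * I (P n * P n)"
    by (simp add: I_add I_smult)
  thus ?thesis using O1[OF r order_refl] by simp
qed

definition L :: "real poly \<Rightarrow> real" where "L g = I g - I (pderiv g) - S g"

lemma L_add: "L (p + q) = L p + L q"
  unfolding L_def by (simp add: pderiv_add I_add S_add)
lemma L_smult: "L (smult c p) = c * L p"
  unfolding L_def by (simp add: pderiv_smult I_smult S_smult algebra_simps)

lemma L_x: "L (pCons 0 f) = a * I f"
proof -
  have "pderiv (pCons 0 f) = f + pCons 0 (pderiv f)" by (rule pderiv_pCons)
  hence e1: "L (pCons 0 f) = I (pCons 0 f) - I f - I (pCons 0 (pderiv f)) - S (pCons 0 f)"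
    unfolding L_def by (simp add: I_add)
  have e2: "I (smult (a+1) f + pCons 0 (pderiv f) - pCons 0 f) = (a+1) * I f + I (pCons 0 (pderiv f)) - I (pCons 0 f)"
    by (simp add: I_add I_diff I_smult)
  from e1 e2 F1[of f] show ?thesis by (simp add: algebra_simps)
qed

lemma L_split: "L (p * pCons v Q) = v * L p + a * I (p * Q)"
proof -
  have "p * pCons v Q = smult v p + pCons 0 (p * Q)" by simp
  thus ?thesis by (simp only: L_add L_smult L_x)
qed

lemma O2p: assumes "degree (pCons 0 q) \<le> n"
  shows "I (pCons 0 (P n * q)) = coeff (pCons 0 q) n * I (P n * P n)"
proof -
  have "P n * pCons 0 q = pCons 0 (P n * q)" by simp
  with O2[OF assms] show ?thesis by simp
qed

lemma deriv_coeff: "degree (pCons 0 (pderiv (P n))) \<le> n \<and> coeff (pCons 0 (pderiv (P n))) n = real n"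
proof (cases n)
  case 0
  thus ?thesis using degP[of 0] by (simp add: pderiv_eq_0_iff)
next
  case (Suc j)
  have "degree (pCons 0 (pderiv (P n))) \<le> Suc (degree (pderiv (P n)))" by (rule degree_pCons_le)
  also have "\<dots> = n" using Suc degP[of n] by (simp add: degree_pderiv)
  finally show ?thesis using Suc coeffP[of n] by (simp add: coeff_pderiv)
qed

lemma alpha_gen:
  "I (pCons 0 (P n * P n)) = (2 * real n + 1 + a) * I (P n * P n) + S (pCons 0 (P n * P n))"
proof -
  define f where "f = P n * P n"
  have F: "(a+1) * I f + I (pCons 0 (pderiv f)) - I (pCons 0 f) = - S (pCons 0 f)"
    using F1[of f] by (simp add: I_add I_diff I_smult)
  have d: "pderiv f = P n * pderiv (P n) + P n * pderiv (P n)" unfolding f_def by (rule pderiv_mult)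
  have "pCons 0 (pderiv f) = pCons 0 (P n * pderiv (P n)) + pCons 0 (P n * pderiv (P n))"
    unfolding d by simp
  hence "I (pCons 0 (pderiv f)) = I (pCons 0 (P n * pderiv (P n))) + I (pCons 0 (P n * pderiv (P n)))"
    by (simp only: I_add)
  also have "I (pCons 0 (P n * pderiv (P n))) = real n * I (P n * P n)"
    using O2p[of "pderiv (P n)" n] deriv_coeff[of n] by simp
  finally show ?thesis using F unfolding f_def by (simp add: algebra_simps)
qed

lemma beta_rec: "I (pCons 0 (P (Suc N) * P N)) = I (P (Suc N) * P (Suc N))"
proof -
  have "degree (pCons 0 (P N)) \<le> Suc N" using degP[of N] by (simp add: degree_pCons_le)
  from O2p[OF this] show ?thesis using coeffP[of N] by simp
qed

lemma dcoeff0: "i \<ge> n \<Longrightarrow> coeff (pderiv (P n)) i = 0"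
  by (simp add: coeff_pderiv coeffP0)

lemma L_sq: "L (P n * P n) = I (P n * P n) - S (P n * P n)"
proof -
  have "I (pderiv (P n * P n)) = I (P n * pderiv (P n)) + I (P n * pderiv (P n))"
    by (simp only: pderiv_mult I_add)
  also have "I (P n * pderiv (P n)) = 0" by (rule O1[of n]) (simp_all add: dcoeff0)
  finally show ?thesis unfolding L_def by simp
qed

lemma beta_gen:
  assumes nN: "n = Suc N"
  shows "(I (P n * P n) - S (P n * P n)) * (I (P N * P N) - S (P N * P N))
    = (- real n * I (P N * P N) - S (P n * P N)) * (- real n * I (P N * P N) - S (P n * P N) - a * I (P N * P N))"
proof -
  obtain u Qn where Pn: "P n = pCons u Qn" by (cases "P n")
  obtain v QN where PN: "P N = pCons v QN" by (cases "P N")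
  have Qn0: "\<forall>i\<ge>n. coeff Qn i = 0"
  proof (intro allI impI)
    fix i assume "n \<le> i"
    hence "coeff (P n) (Suc i) = 0" by (intro coeffP0) simp
    thus "coeff Qn i = 0" by (simp add: Pn)
  qed
  have QN0: "\<forall>i\<ge>N. coeff QN i = 0"
  proof (intro allI impI)
    fix i assume "N \<le> i"
    hence "coeff (P N) (Suc i) = 0" by (intro coeffP0) simp
    thus "coeff QN i = 0" by (simp add: PN)
  qed
  have degQn: "degree Qn \<le> N" by (rule degree_le) (use Qn0 nN in auto)
  have "coeff (P n) (Suc N) = 1" using coeffP[of n] nN by simp
  hence cQn: "coeff Qn N = 1" using Pn by simp
  define X where "X = L (P n)"
  define Y where "Y = L (P N)"
  define hN where "hN = I (P N * P N)"
  have A: "L (P n * P n) = u * X"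
  proof -
    have "L (P n * P n) = L (P n * pCons u Qn)" by (simp only: Pn[symmetric])
    also have "\<dots> = u * X + a * I (P n * Qn)" unfolding X_def by (rule L_split)
    also have "I (P n * Qn) = 0" by (rule O1[OF Qn0 order_refl])
    finally show ?thesis by simp
  qed
  have B: "L (P N * P N) = v * Y"
  proof -
    have "L (P N * P N) = L (P N * pCons v QN)" by (simp only: PN[symmetric])
    also have "\<dots> = v * Y + a * I (P N * QN)" unfolding Y_def by (rule L_split)
    also have "I (P N * QN) = 0" by (rule O1[OF QN0 order_refl])
    finally show ?thesis by simp
  qed
  have C1: "L (P n * P N) = v * X"
  proof -
    have "L (P n * P N) = L (P n * pCons v QN)" by (simp only: PN[symmetric])
    also have "\<dots> = v * X + a * I (P n * QN)" unfolding X_def by (rule L_split)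
    also have "I (P n * QN) = 0" by (rule O1[OF QN0]) (simp add: nN)
    finally show ?thesis by simp
  qed
  have C2: "L (P n * P N) = u * Y + a * hN"
  proof -
    have "L (P n * P N) = L (P N * pCons u Qn)" by (simp only: Pn[symmetric] mult.commute)
    also have "\<dots> = u * Y + a * I (P N * Qn)" unfolding Y_def by (rule L_split)
    also have "I (P N * Qn) = hN" unfolding hN_def using O2[OF degQn] cQn by simp
    finally show ?thesis .
  qed
  have key: "L (P n * P n) * L (P N * P N) = L (P n * P N) * (L (P n * P N) - a * hN)"
  proof -
    have "L (P n * P N) - a * hN = u * Y" using C2 by simp
    thus ?thesis unfolding A B using C1 by simp
  qed
  have C: "L (P n * P N) = - real n * hN - S (P n * P N)"
  proof -
    have "I (pderiv (P n * P N)) = I (P n * pderiv (P N)) + I (P N * pderiv (P n))"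
      by (simp only: pderiv_mult I_add)
    also have "I (P n * pderiv (P N)) = 0" by (rule O1[of N]) (simp_all add: dcoeff0 nN)
    also have "I (P N * pderiv (P n)) = real n * hN"
    proof -
      have "degree (pderiv (P n)) \<le> N" using degP[of n] nN by (simp add: degree_pderiv)
      from O2[OF this] show ?thesis unfolding hN_def using coeffP[of n] nN by (simp add: coeff_pderiv)
    qed
    finally have d: "I (pderiv (P n * P N)) = 0 + real n * hN" .
    have "I (P n * P N) = 0" by (rule orth) (simp add: nN)
    thus ?thesis unfolding L_def using d by simp
  qed
  show ?thesis using key unfolding C L_sq hN_def by simp
qed

end

lemma final_alg:
  fixes hn hN Sn2 SN2 SnN b n a :: real
  assumes hn: "hn \<noteq> 0" and hN: "hN \<noteq> 0" and A: "hn - Sn2 \<noteq> 0" and b: "b * hN = hn"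
    and key: "(hn - Sn2) * (hN - SN2) = (- n * hN - SnN) * (- n * hN - SnN - a * hN)"
  shows "b = (n + a + SnN / hN) * (n + SnN / hN) / (1 - Sn2 / hn) + hn / hN^2 * SN2"
proof -
  have e1: "(n + a + SnN / hN) * (n + SnN / hN) = ((n*hN + a*hN + SnN) * (n*hN + SnN)) / hN^2"
    using hN by (simp add: field_simps power2_eq_square)
  have e2: "(n*hN + a*hN + SnN) * (n*hN + SnN) = (hn - Sn2) * (hN - SN2)"
    unfolding key by (simp add: algebra_simps)
  have e3: "1 - Sn2 / hn = (hn - Sn2) / hn" using hn by (simp add: field_simps)
  have "(n + a + SnN / hN) * (n + SnN / hN) / (1 - Sn2 / hn) = (hN - SN2) * hn / hN^2"
    unfolding e1 e2 e3 using hn hN A by (simp add: field_simps power2_eq_square)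
  moreover have "b = hn / hN" using b hN by (simp add: field_simps)
  ultimately show ?thesis using hN by (simp add: field_simps power2_eq_square)
qed
lemma ip_Iw: "ip (wgt m a om t) p q = Iw m a om t (p * q)"
  unfolding ip_def Iw_def by (simp add: mult.assoc)

theorem lemma2p5:
  fixes m :: nat and a :: real and t om :: "nat \<Rightarrow> real"
    and P :: "nat \<Rightarrow> real poly" and alpha beta :: "nat \<Rightarrow> real"
  assumes m: "m \<ge> 1"
    and a: "a > -1"
    and t1: "0 < t 1"
    and tmono: "\<And>k. 1 \<le> k \<Longrightarrow> k < m \<Longrightarrow> t k < t (Suc k)"
    and om: "\<And>l. l \<le> m \<Longrightarrow> (\<Sum>k=0..l. om k) \<ge> 0"
    and OP: "monic_OPs (wgt m a om t) P"
    and rec0: "[:0, 1:] * P 0 = P 1 + smult (alpha 0) (P 0)"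
    and rec: "\<And>n. n \<ge> 1 \<Longrightarrow>
       [:0, 1:] * P n = P (Suc n) + smult (alpha n) (P n) + smult (beta n) (P (n - 1))"
  defines "h \<equiv> (\<lambda>n. ip (wgt m a om t) (P n) (P n))"
  defines "R \<equiv> (\<lambda>n k. om k * w0 a (t k) / h n * (poly (P n) (t k))^2)"
  defines "r \<equiv> (\<lambda>n k. om k * w0 a (t k) / h (n - 1) * poly (P n) (t k) * poly (P (n - 1)) (t k))"
  shows "(\<forall>n. alpha n = (\<Sum>k=1..m. t k * R n k) + 2 * real n + 1 + a) \<and>
         (\<forall>n \<ge> 1. (\<forall>k\<in>{1..m}. om k \<noteq> 0 \<longrightarrow> poly (P n) (t k) \<noteq> 0) \<longrightarrow>
            (\<Sum>k=1..m. R n k) \<noteq> 1 \<longrightarrow>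
            beta n = (real n + a + (\<Sum>k=1..m. r n k)) * (real n + (\<Sum>k=1..m. r n k))
                       / (1 - (\<Sum>k=1..m. R n k))
                     + (\<Sum>k=1..m. (r n k)^2 / R n k))"
proof -
  have tge: "t 1 \<le> t k" if "1 \<le> k" "k \<le> m" for k
    using that
  proof (induction k)
    case 0 thus ?case by simp
  next
    case (Suc j)
    show ?case
    proof (cases "j = 0")
      case True thus ?thesis by simp
    next
      case False
      hence "t 1 \<le> t j" using Suc by simp
      also have "t j < t (Suc j)" using tmono[of j] False Suc.prems by simp
      finally show ?thesis by simp
    qed
  qed
  have tpos: "\<And>k. k \<in> {1..m} \<Longrightarrow> t k > 0" using tge t1 by fastforce
  have tp: "\<forall>k\<in>{1..m}. t k \<ge> 0" using tpos by (simp add: less_imp_le)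
  define I where "I = Iw m a om t"
  define S where "S f = (\<Sum>k=1..m. om k * w0 a (t k) * poly f (t k))" for f
  have OP': "\<And>n. degree (P n) = n \<and> lead_coeff (P n) = 1 \<and> I (P n * P n) \<noteq> 0"
    "\<And>k n. k \<noteq> n \<Longrightarrow> I (P k * P n) = 0"
    using OP unfolding monic_OPs_def I_def ip_Iw by blast+
  interpret opsys I S P a
  proof
    show "I (p + q) = I p + I q" for p q unfolding I_def by (rule Iw_add[OF a tp])
    show "I (smult c p) = c * I p" for c p unfolding I_def by (rule Iw_smult[OF a tp])
    show "S (p + q) = S p + S q" for p q unfolding S_def by (simp add: sum.distrib algebra_simps)
    show "S (smult c p) = c * S p" for c p unfolding S_def by (simp add: sum_distrib_left algebra_simps)
    show "I (smult (a + 1) f + pCons 0 (pderiv f) - pCons 0 f) = - S (pCons 0 f)" for f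
      unfolding I_def S_def by (rule Iw_F1[OF a tpos])
  qed (use OP' in blast)+
  have hI: "h n = I (P n * P n)" for n unfolding h_def I_def ip_Iw ..
  have hnz: "h n \<noteq> 0" for n using OP'(1)[of n] hI by simp
  have recI: "I (P j * pCons 0 (P n)) = alpha n * I (P j * P n) + I (P j * P (Suc n))
      + (if n \<ge> 1 then beta n * I (P j * P (n - 1)) else 0)" for j n
  proof (cases "n \<ge> 1")
    case True
    have "pCons 0 (P n) = P (Suc n) + smult (alpha n) (P n) + smult (beta n) (P (n - 1))"
      using rec[OF True] by simp
    hence "P j * pCons 0 (P n) = P j * P (Suc n) + smult (alpha n) (P j * P n) + smult (beta n) (P j * P (n - 1))"
      by (simp add: algebra_simps)
    thus ?thesis using True by (simp add: I_add I_smult)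
  next
    case False
    hence n0: "n = 0" by simp
    have "pCons 0 (P 0) = P 1 + smult (alpha 0) (P 0)"
      using rec0 by simp
    hence "P j * pCons 0 (P 0) = P j * P 1 + smult (alpha 0) (P j * P 0)"
      by (simp add: algebra_simps)
    thus ?thesis using n0 by (simp add: I_add I_smult)
  qed
  have part1: "alpha n = (\<Sum>k=1..m. t k * R n k) + 2 * real n + 1 + a" for n
  proof -
    have "I (pCons 0 (P n * P n)) = I (P n * pCons 0 (P n))" by simp
    also have "\<dots> = alpha n * h n" using recI[of n n] hI[of n] orth[of n "Suc n"] orth[of n "n - 1"]
      by (cases "n \<ge> 1") auto
    finally have e: "alpha n * h n = (2 * real n + 1 + a) * h n + S (pCons 0 (P n * P n))"
      using alpha_gen[of n] hI[of n] by simp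
    have "(\<Sum>k=1..m. t k * R n k) = S (pCons 0 (P n * P n)) / h n"
      unfolding S_def R_def sum_divide_distrib
      by (rule sum.cong) (simp_all add: power2_eq_square)
    hence "S (pCons 0 (P n * P n)) = (\<Sum>k=1..m. t k * R n k) * h n" using hnz[of n] by simp
    hence "alpha n * h n = ((\<Sum>k=1..m. t k * R n k) + 2 * real n + 1 + a) * h n"
      using e by (simp add: algebra_simps)
    thus ?thesis using hnz[of n] by simp
  qed
  have part2: "beta n = (real n + a + (\<Sum>k=1..m. r n k)) * (real n + (\<Sum>k=1..m. r n k))
                       / (1 - (\<Sum>k=1..m. R n k))
                     + (\<Sum>k=1..m. (r n k)^2 / R n k)"
    if n1: "n \<ge> 1" and nz: "\<forall>k\<in>{1..m}. om k \<noteq> 0 \<longrightarrow> poly (P n) (t k) \<noteq> 0"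
      and Rne: "(\<Sum>k=1..m. R n k) \<noteq> 1" for n
  proof -
    obtain N where nN: "n = Suc N" using n1 by (cases n) auto
    have NN: "n - 1 = N" using nN by simp
    have bh: "beta n * h N = h n"
    proof -
      have "I (pCons 0 (P n * P N)) = I (P N * pCons 0 (P n))" by (simp add: mult.commute)
      also have "\<dots> = beta n * h N"
        using recI[of N n] hI[of N] orth[of N n] orth[of N "Suc n"] n1 NN nN by simp
      finally show ?thesis using beta_rec[of N] hI[of n] nN by simp
    qed
    have sR: "(\<Sum>k=1..m. R n k) = S (P n * P n) / h n"
      unfolding S_def R_def sum_divide_distrib
      by (rule sum.cong) (simp_all add: power2_eq_square)
    have sr: "(\<Sum>k=1..m. r n k) = S (P n * P N) / h N"
      unfolding S_def r_def sum_divide_distrib NN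
      by (rule sum.cong) (simp_all add: algebra_simps)
    have srR: "(\<Sum>k=1..m. (r n k)^2 / R n k) = h n / (h N)^2 * S (P N * P N)"
      unfolding S_def sum_distrib_left
    proof (rule sum.cong)
      fix k assume k: "k \<in> {1..m}"
      show "(r n k)^2 / R n k = h n / (h N)^2 * (om k * w0 a (t k) * poly (P N * P N) (t k))"
      proof (cases "om k = 0")
        case True thus ?thesis unfolding r_def R_def by simp
      next
        case False
        have pn: "poly (P n) (t k) \<noteq> 0" using nz k False by blast
        have w: "w0 a (t k) \<noteq> 0" using tpos[OF k] by (simp add: w0_def)
        show ?thesis unfolding r_def R_def NN using False pn w hnz[of n] hnz[of N]
          by (simp add: field_simps power2_eq_square)
      qed
    qed simp
    have key: "(h n - S (P n * P n)) * (h N - S (P N * P N))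
      = (- real n * h N - S (P n * P N)) * (- real n * h N - S (P n * P N) - a * h N)"
      using beta_gen[OF nN] unfolding L_sq hI by simp
    have A: "h n - S (P n * P n) \<noteq> 0"
    proof
      assume "h n - S (P n * P n) = 0"
      hence "S (P n * P n) / h n = 1" using hnz[of n] by simp
      thus False using Rne sR by simp
    qed
    show ?thesis unfolding sR sr srR
      by (rule final_alg[OF hnz[of n] hnz[of N] A bh key])
  qed
  show ?thesis using part1 part2 by blast
qed

end
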